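(* Let $(E,d)$ be a Polish space, $p>1$ and $\mu\in(0,1)$. There is a constant $C>0$ such that for every $f\in D^{\mu}([0,1],E)$, \[ [f]_{\mu}+|f]_{\mu}+[f|_{\mu}\le C\left([[f]]_{\mu,p}+||f]]_{\mu,p}+[[f||_{\mu,p}\right). \] Moreover, if $E=\mathbf{R}^{d}$ with $d(x,y)=|x-y|$, then for every $f\in D^{\mu}([0,1],\mathbf{R}^d)$, \[ \sup_{0\le t\le 1}|f(t)|\le C\left(|f|_{L_p([0,1])}+[[f]]_{\mu,p}+||f]]_{\mu,p}+[[f||_{\mu,p}\right). \]
   Context: $D([0,1],E)$ denotes the space of $E$-valued càdlàg functions on $[0,1]$. For $0\le s\le t\le u\le 1$, $\Delta(f;s,t,u)=d(f(s),f(t))\wedge d(f(t),f(u))$. For $\mu\in(0,1)$, $[f]_{\mu}=\sup_{0\le s\le t\le u\le 1}\frac{\Delta(f;s,t,u)}{|u-s|^{\mu}}$, $|f]_{\mu}=\sup_{t\in(0,1]}\frac{d(f(0),f(t))}{t^{\mu}}$, $[f|_{\mu}=\sup_{t\in[0,1)}\frac{d(f(1),f(t))}{|1-t|^{\mu}}$, and $D^{\mu}([0,1],E)$ is the set of $f\in D([0,1],E)$ with $[f]_\mu+|f]_\mu+[f|_\mu<\infty$. For $p>1$: $[[f]]_{\mu,p}=\left(\iiint_{0\le s<t<u\le 1}\frac{\Delta(f;s,t,u)^{p}}{|u-s|^{\mu p+3}}\,ds\,dt\,du\right)^{1/p}$, $||f]]_{\mu,p}=\left(\int_0^1\frac{d(f(0),f(t))^{p}}{t^{\mu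 p+1}}dt\right)^{1/p}$, $[[f||_{\mu,p}=\left(\int_0^1\frac{d(f(1),f(t))^{p}}{|1-t|^{\mu p+1}}dt\right)^{1/p}$. *)

theory Defs
  imports "HOL-Analysis.Analysis"
begin

text \<open>Cadlag functions on [0,1]: right-continuous on [0,1), left limits on (0,1].
  Only the values on [0,1] matter.\<close>
definition cadlag :: "(real \<Rightarrow> 'a::metric_space) \<Rightarrow> bool" where
  "cadlag f \<longleftrightarrow> (\<forall>t\<in>{0..<1}. (f \<longlongrightarrow> f t) (at_right t))
                 \<and> (\<forall>t\<in>{0<..1}. \<exists>l. (f \<longlongrightarrow> l) (at_left t))"

definition Delta :: "(real \<Rightarrow> 'a::metric_space) \<Rightarrow> real \<Rightarrow> real \<Rightarrow> real \<Rightarrow> real" where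
  "Delta f s t u = min (dist (f s) (f t)) (dist (f t) (f u))"

definition hol_mid_set :: "real \<Rightarrow> (real \<Rightarrow> 'a::metric_space) \<Rightarrow> real set" where
  "hol_mid_set \<mu> f = {Delta f s t u / \<bar>u - s\<bar> powr \<mu> | s t u. 0 \<le> s \<and> s \<le> t \<and> t \<le> u \<and> u \<le> 1}"

definition hol_left_set :: "real \<Rightarrow> (real \<Rightarrow> 'a::metric_space) \<Rightarrow> real set" where
  "hol_left_set \<mu> f = {dist (f 0) (f t) / t powr \<mu> | t. t \<in> {0<..1}}"

definition hol_right_set :: "real \<Rightarrow> (real \<Rightarrow> 'a::metric_space) \<Rightarrow> real set" where
  "hol_right_set \<mu> f = {dist (f 1) (f t) / \<bar>1 - t\<bar> powr \<mu> | t. t \<in> {0..<1}}"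

definition hol_mid :: "real \<Rightarrow> (real \<Rightarrow> 'a::metric_space) \<Rightarrow> real" where
  "hol_mid \<mu> f = Sup (hol_mid_set \<mu> f)"
definition hol_left :: "real \<Rightarrow> (real \<Rightarrow> 'a::metric_space) \<Rightarrow> real" where
  "hol_left \<mu> f = Sup (hol_left_set \<mu> f)"
definition hol_right :: "real \<Rightarrow> (real \<Rightarrow> 'a::metric_space) \<Rightarrow> real" where
  "hol_right \<mu> f = Sup (hol_right_set \<mu> f)"

definition Dmu :: "real \<Rightarrow> (real \<Rightarrow> 'a::metric_space) set" where
  "Dmu \<mu> = {f. cadlag f \<and> bdd_above (hol_mid_set \<mu> f) \<and> bdd_above (hol_left_set \<mu> f)
               \<and> bdd_above (hol_right_set \<mu> f)}"

text \<open>The p-th powers of the integral seminorms, as (possibly infinite) nonnegative integrals.\<close>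
definition int_mid_pow :: "real \<Rightarrow> real \<Rightarrow> (real \<Rightarrow> 'a::metric_space) \<Rightarrow> ennreal" where
  "int_mid_pow \<mu> p f = (\<integral>\<^sup>+ x. indicator {(s,t,u). 0 \<le> s \<and> s < t \<and> t < u \<and> u \<le> 1} x *
      ennreal (case x of (s,t,u) \<Rightarrow> Delta f s t u powr p / \<bar>u - s\<bar> powr (\<mu> * p + 3))
      \<partial>(lborel \<Otimes>\<^sub>M lborel \<Otimes>\<^sub>M lborel))"

definition int_left_pow :: "real \<Rightarrow> real \<Rightarrow> (real \<Rightarrow> 'a::metric_space) \<Rightarrow> ennreal" where
  "int_left_pow \<mu> p f = (\<integral>\<^sup>+ t. indicator {0..1} t *
      ennreal (dist (f 0) (f t) powr p / t powr (\<mu> * p + 1)) \<partial>lborel)"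

definition int_right_pow :: "real \<Rightarrow> real \<Rightarrow> (real \<Rightarrow> 'a::metric_space) \<Rightarrow> ennreal" where
  "int_right_pow \<mu> p f = (\<integral>\<^sup>+ t. indicator {0..1} t *
      ennreal (dist (f 1) (f t) powr p / \<bar>1 - t\<bar> powr (\<mu> * p + 1)) \<partial>lborel)"

definition Lp_pow :: "real \<Rightarrow> (real \<Rightarrow> 'a::real_normed_vector) \<Rightarrow> ennreal" where
  "Lp_pow p f = (\<integral>\<^sup>+ t. indicator {0..1} t * ennreal (norm (f t) powr p) \<partial>lborel)"

end

theory Submission
  imports Defs
begin



lemma emeasure_box3:
  fixes a1 a2 a3 g :: real
  assumes "g \<ge> 0"
  shows "emeasure (lborel \<Otimes>\<^sub>M lborel \<Otimes>\<^sub>M lborel) ({a1<..<a1+g} \<times> {a2<..<a2+g} \<times> {a3<..<a3+g})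
     = ennreal (g^3)"
proof -
  have sf: "sigma_finite_measure (lborel \<Otimes>\<^sub>M lborel :: (real\<times>real) measure)"
    by (intro sigma_finite_pair_measure lborel.sigma_finite_measure_axioms)
  have "emeasure (lborel \<Otimes>\<^sub>M lborel \<Otimes>\<^sub>M lborel) ({a1<..<a1+g} \<times> {a2<..<a2+g} \<times> {a3<..<a3+g})
     = emeasure lborel {a1<..<a1+g} * emeasure (lborel \<Otimes>\<^sub>M lborel) ({a2<..<a2+g} \<times> {a3<..<a3+g})"
    by (rule sigma_finite_measure.emeasure_pair_measure_Times[OF sf]) (auto intro!: pair_measureI)
  also have "emeasure (lborel \<Otimes>\<^sub>M lborel) ({a2<..<a2+g} \<times> {a3<..<a3+g}) = emeasure lborel {a2<..<a2+g} * emeasure lborel {a3<..<a3+g}"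
    by (rule lborel.emeasure_pair_measure_Times) auto
  finally show ?thesis using assms
    by (simp add: ennreal_mult' power3_eq_cube mult.assoc)
qed

lemma mid_lower:
  fixes f :: "real \<Rightarrow> 'a::metric_space"
  assumes g: "g > 0" and c: "c \<ge> 0" and D: "D > 0" and "p > 0" and "\<mu> > 0"
    and o: "0 \<le> a1" "a1 + g \<le> a2" "a2 + g \<le> a3" "a3 + g \<le> 1" "a3 + g - a1 \<le> D"
    and dl: "\<And>x y z. x \<in> {a1<..<a1+g} \<Longrightarrow> y \<in> {a2<..<a2+g} \<Longrightarrow> z \<in> {a3<..<a3+g} \<Longrightarrow> c \<le> Delta f x y z"
  shows "ennreal (g^3 * (c powr p / D powr (\<mu> * p + 3))) \<le> int_mid_pow \<mu> p f"
proof -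
  let ?S = "{a1<..<a1+g} \<times> {a2<..<a2+g} \<times> {a3<..<a3+g}"
  let ?k = "c powr p / D powr (\<mu> * p + 3)"
  have Sm: "?S \<in> sets (lborel \<Otimes>\<^sub>M lborel \<Otimes>\<^sub>M lborel)"
    by (auto intro!: pair_measureI)
  have "ennreal (g^3 * ?k) = ennreal ?k * emeasure (lborel \<Otimes>\<^sub>M lborel \<Otimes>\<^sub>M lborel) ?S"
    using g c D by (simp add: emeasure_box3 ennreal_mult[symmetric] mult.commute)
  also have "\<dots> = (\<integral>\<^sup>+ x. ennreal ?k * indicator ?S x \<partial>(lborel \<Otimes>\<^sub>M lborel \<Otimes>\<^sub>M lborel))"
    by (rule nn_integral_cmult_indicator[symmetric, OF Sm])
  also have "\<dots> \<le> int_mid_pow \<mu> p f"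
    unfolding int_mid_pow_def
  proof (rule nn_integral_mono)
    fix x :: "real \<times> real \<times> real"
    obtain s t u where x: "x = (s,t,u)" by (cases x) auto
    show "ennreal ?k * indicator ?S x \<le> indicator {(s,t,u). 0 \<le> s \<and> s < t \<and> t < u \<and> u \<le> 1} x *
      ennreal (case x of (s,t,u) \<Rightarrow> Delta f s t u powr p / \<bar>u - s\<bar> powr (\<mu> * p + 3))"
    proof (cases "x \<in> ?S")
      case False then show ?thesis by simp
    next
      case True
      then have s: "a1 < s" "s < a1 + g" and t: "a2 < t" "t < a2+g" and u: "a3 < u" "u < a3 + g"
        using x by auto
      have reg: "x \<in> {(s,t,u). 0 \<le> s \<and> s < t \<and> t < u \<and> u \<le> 1}"
        using x s t u o by auto
      have "c \<le> Delta f s t u" using dl s t u by auto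
      then have 1: "c powr p \<le> Delta f s t u powr p" using c \<open>p>0\<close> by (intro powr_mono2) auto
      have 2: "\<bar>u - s\<bar> powr (\<mu> * p + 3) \<le> D powr (\<mu> * p + 3)"
        using s u o \<open>p>0\<close> \<open>\<mu>>0\<close> by (intro powr_mono2) auto
      have 3: "0 < \<bar>u - s\<bar> powr (\<mu> * p + 3)" using s u o by auto
      have "?k \<le> Delta f s t u powr p / \<bar>u - s\<bar> powr (\<mu> * p + 3)"
        using 1 2 3 c by (intro frac_le) auto
      then show ?thesis using True reg x by (simp add: ennreal_leI)
    qed
  qed
  finally show ?thesis .
qed


lemma left_lower:
  fixes f :: "real \<Rightarrow> 'a::metric_space"
  assumes g: "g > 0" and c: "c \<ge> 0" and "p > 0" and "\<mu> > 0"
    and o: "0 \<le> a" "a + g \<le> 1" "a + g \<le> D"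
    and dl: "\<And>x. x \<in> {a<..<a+g} \<Longrightarrow> c \<le> dist (f 0) (f x)"
  shows "ennreal (g * (c powr p / D powr (\<mu> * p + 1))) \<le> int_left_pow \<mu> p f"
proof -
  let ?S = "{a<..<a+g}"
  let ?k = "c powr p / D powr (\<mu> * p + 1)"
  have "ennreal (g * ?k) = ennreal ?k * emeasure lborel ?S"
    using g c by (simp add: ennreal_mult[symmetric] mult.commute)
  also have "\<dots> = (\<integral>\<^sup>+ x. ennreal ?k * indicator ?S x \<partial>lborel)"
    by (rule nn_integral_cmult_indicator[symmetric]) auto
  also have "\<dots> \<le> int_left_pow \<mu> p f"
    unfolding int_left_pow_def
  proof (rule nn_integral_mono)
    fix x :: real
    show "ennreal ?k * indicator ?S x \<le> indicator {0..1} x *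
      ennreal (dist (f 0) (f x) powr p / x powr (\<mu> * p + 1))"
    proof (cases "x \<in> ?S")
      case False then show ?thesis by simp
    next
      case True
      then have s: "a < x" "x < a + g" by auto
      have "c \<le> dist (f 0) (f x)" using dl True by auto
      then have 1: "c powr p \<le> dist (f 0) (f x) powr p" using c \<open>p>0\<close> by (intro powr_mono2) auto
      have 2: "x powr (\<mu> * p + 1) \<le> D powr (\<mu> * p + 1)"
        using s o \<open>p>0\<close> \<open>\<mu>>0\<close> by (intro powr_mono2) auto
      have 3: "0 < x powr (\<mu> * p + 1)" using s o by auto
      have "?k \<le> dist (f 0) (f x) powr p / x powr (\<mu> * p + 1)"
        using 1 2 3 c by (intro frac_le) auto
      then show ?thesis using True s o by (simp add: ennreal_leI)
    qed
  qed
  finally show ?thesis .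
qed

lemma right_lower:
  fixes f :: "real \<Rightarrow> 'a::metric_space"
  assumes g: "g > 0" and c: "c \<ge> 0" and "p > 0" and "\<mu> > 0"
    and o: "0 \<le> a" "a + g \<le> 1" "1 - a \<le> D"
    and dl: "\<And>x. x \<in> {a<..<a+g} \<Longrightarrow> c \<le> dist (f 1) (f x)"
  shows "ennreal (g * (c powr p / D powr (\<mu> * p + 1))) \<le> int_right_pow \<mu> p f"
proof -
  let ?S = "{a<..<a+g}"
  let ?k = "c powr p / D powr (\<mu> * p + 1)"
  have "ennreal (g * ?k) = ennreal ?k * emeasure lborel ?S"
    using g c by (simp add: ennreal_mult[symmetric] mult.commute)
  also have "\<dots> = (\<integral>\<^sup>+ x. ennreal ?k * indicator ?S x \<partial>lborel)"
    by (rule nn_integral_cmult_indicator[symmetric]) auto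
  also have "\<dots> \<le> int_right_pow \<mu> p f"
    unfolding int_right_pow_def
  proof (rule nn_integral_mono)
    fix x :: real
    show "ennreal ?k * indicator ?S x \<le> indicator {0..1} x *
      ennreal (dist (f 1) (f x) powr p / \<bar>1 - x\<bar> powr (\<mu> * p + 1))"
    proof (cases "x \<in> ?S")
      case False then show ?thesis by simp
    next
      case True
      then have s: "a < x" "x < a + g" by auto
      have "c \<le> dist (f 1) (f x)" using dl True by auto
      then have 1: "c powr p \<le> dist (f 1) (f x) powr p" using c \<open>p>0\<close> by (intro powr_mono2) auto
      have 2: "\<bar>1 - x\<bar> powr (\<mu> * p + 1) \<le> D powr (\<mu> * p + 1)"
        using s o \<open>p>0\<close> \<open>\<mu>>0\<close> by (intro powr_mono2) auto
      have 3: "0 < \<bar>1 - x\<bar> powr (\<mu> * p + 1)" using s o by auto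
      have "?k \<le> dist (f 1) (f x) powr p / \<bar>1 - x\<bar> powr (\<mu> * p + 1)"
        using 1 2 3 c by (intro frac_le) auto
      then show ?thesis using True s o by (simp add: ennreal_leI)
    qed
  qed
  finally show ?thesis .
qed

lemma Lp_lower:
  fixes g :: "real \<Rightarrow> 'a::real_normed_vector"
  assumes c: "c \<ge> 0" and "p > 0"
    and dl: "\<And>x. x \<in> {0..1} \<Longrightarrow> c \<le> norm (g x)"
  shows "ennreal (c powr p) \<le> Lp_pow p g"
proof -
  have "ennreal (c powr p) = ennreal (c powr p) * emeasure lborel {0..1::real}"
    by simp
  also have "\<dots> = (\<integral>\<^sup>+ x. ennreal (c powr p) * indicator {0..1::real} x \<partial>lborel)"
    by (rule nn_integral_cmult_indicator[symmetric]) auto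
  also have "\<dots> \<le> Lp_pow p g"
    unfolding Lp_pow_def
  proof (rule nn_integral_mono)
    fix x :: real
    show "ennreal (c powr p) * indicator {0..1} x \<le> indicator {0..1} x * ennreal (norm (g x) powr p)"
    proof (cases "x \<in> {0..1}")
      case False then show ?thesis by simp
    next
      case True
      have "c powr p \<le> norm (g x) powr p" using dl[OF True] c \<open>p>0\<close> by (intro powr_mono2) auto
      then show ?thesis using True by (simp add: ennreal_leI)
    qed
  qed
  finally show ?thesis .
qed




locale hctx =
  fixes f :: "real \<Rightarrow> 'a::metric_space" and H \<mu> :: real
  assumes Hnn: "H \<ge> 0" and mu: "\<mu> > 0"
    and hm: "\<And>x y z w. 0 \<le> x \<Longrightarrow> x \<le> y \<Longrightarrow> y \<le> z \<Longrightarrow> z \<le> 1 \<Longrightarrow> z - x \<le> w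
              \<Longrightarrow> min (dist (f x) (f y)) (dist (f y) (f z)) \<le> H * w powr \<mu>"
    and hl: "\<And>x w. 0 \<le> x \<Longrightarrow> x \<le> 1 \<Longrightarrow> x \<le> w \<Longrightarrow> dist (f 0) (f x) \<le> H * w powr \<mu>"
    and hr: "\<And>x w. 0 \<le> x \<Longrightarrow> x \<le> 1 \<Longrightarrow> 1 - x \<le> w \<Longrightarrow> dist (f 1) (f x) \<le> H * w powr \<mu>"
begin

lemma Rnn: "g \<ge> 0 \<Longrightarrow> 0 \<le> H * (4*g) powr \<mu>"
  using Hnn by simp

lemma good_interval:
  assumes g: "0 < g" "g \<le> 1/4" and q: "0 \<le> q" "q \<le> 1"
  shows "\<exists>a. 0 \<le> a \<and> a + g \<le> 1 \<and> q - g \<le> a \<and> a \<le> q \<and>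
     (\<forall>x\<in>{a<..<a+g}. dist (f q) (f x) \<le> 2 * H * (4*g) powr \<mu>)"
proof -
  let ?R = "2 * H * (4*g) powr \<mu>"
  have R0: "0 \<le> H * (4*g) powr \<mu>" using Rnn g by simp
  consider "q < g" | "q > 1 - g" | "g \<le> q" "q \<le> 1 - g" by linarith
  then show ?thesis
  proof cases
    case 1
    have "\<forall>x\<in>{0<..<0+g}. dist (f q) (f x) \<le> ?R"
    proof
      fix x assume x: "x \<in> {0<..<0+g}"
      have "dist (f q) (f x) \<le> dist (f 0) (f q) + dist (f 0) (f x)" by (metis dist_triangle dist_commute)
      also have "\<dots> \<le> H * (4*g) powr \<mu> + H * (4*g) powr \<mu>"
        using 1 x g q by (intro add_mono hl) auto
      finally show "dist (f q) (f x) \<le> ?R" by simp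
    qed
    then show ?thesis using 1 g q by (intro exI[of _ 0]) auto
  next
    case 2
    have "\<forall>x\<in>{1-g<..<1-g+g}. dist (f q) (f x) \<le> ?R"
    proof
      fix x assume x: "x \<in> {1-g<..<1-g+g}"
      have "dist (f q) (f x) \<le> dist (f 1) (f q) + dist (f 1) (f x)" by (metis dist_triangle dist_commute)
      also have "\<dots> \<le> H * (4*g) powr \<mu> + H * (4*g) powr \<mu>"
        using 2 x g q by (intro add_mono hr) auto
      finally show "dist (f q) (f x) \<le> ?R" by simp
    qed
    then show ?thesis using 2 g q by (intro exI[of _ "1-g"]) auto
  next
    case 3
    show ?thesis
    proof (cases "\<forall>x\<in>{q-g<..<q-g+g}. dist (f q) (f x) \<le> ?R")
      case True
      then show ?thesis using 3 g q by (intro exI[of _ "q-g"]) auto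
    next
      case False
      then obtain x where x: "x \<in> {q-g<..<q}" and dx: "dist (f q) (f x) > ?R" by auto
      have "\<forall>y\<in>{q<..<q+g}. dist (f q) (f y) \<le> ?R"
      proof
        fix y assume y: "y \<in> {q<..<q+g}"
        have "min (dist (f x) (f q)) (dist (f q) (f y)) \<le> H * (4*g) powr \<mu>"
          using x y g 3 by (intro hm) auto
        then show "dist (f q) (f y) \<le> ?R" using dx R0 by (auto simp: dist_commute min_le_iff_disj)
      qed
      then show ?thesis using 3 g q by (intro exI[of _ q]) auto
    qed
  qed
qed


lemma combine:
  assumes g: "g > 0" and "c \<ge> 0" and D: "D > 0" and "p > 0"
    and o: "0 \<le> a1" "a1 + g \<le> a2" "a2 + g \<le> a3" "a3 + g \<le> 1" "a3 + g - a1 \<le> D"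
    and S1: "\<And>x. x \<in> {a1<..<a1+g} \<Longrightarrow> dist (f s) (f x) \<le> R"
    and S2: "\<And>x. x \<in> {a2<..<a2+g} \<Longrightarrow> dist (f t) (f x) \<le> R"
    and S3: "\<And>x. x \<in> {a3<..<a3+g} \<Longrightarrow> dist (f u) (f x) \<le> R"
    and d1: "c + 2 * R \<le> dist (f s) (f t)" and d2: "c + 2 * R \<le> dist (f t) (f u)"
  shows "ennreal (g^3 * (c powr p / D powr (\<mu> * p + 3))) \<le> int_mid_pow \<mu> p f"
proof (rule mid_lower[OF g \<open>c\<ge>0\<close> D \<open>p>0\<close> mu o])
  fix x y z assume x: "x \<in> {a1<..<a1+g}" and y: "y \<in> {a2<..<a2+g}" and z: "z \<in> {a3<..<a3+g}"
  have "dist (f s) (f t) \<le> dist (f s) (f x) + dist (f x) (f t)" by (rule dist_triangle)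
  moreover have "dist (f x) (f t) \<le> dist (f x) (f y) + dist (f y) (f t)" by (rule dist_triangle)
  moreover have "dist (f t) (f u) \<le> dist (f t) (f y) + dist (f y) (f u)" by (rule dist_triangle)
  moreover have "dist (f y) (f u) \<le> dist (f y) (f z) + dist (f z) (f u)" by (rule dist_triangle)
  ultimately show "c \<le> Delta f x y z"
    using S1[OF x] S2[OF y] S3[OF z] d1 d2 unfolding Delta_def by (simp add: dist_commute)
qed

lemma mid_case:
  assumes eta: "0 < \<eta>" "\<eta> \<le> 1/4" and "p > 0"
    and st: "0 \<le> s" "s \<le> t" "t \<le> u" "u \<le> 1" "s < u"
  defines "g \<equiv> \<eta> * (u - s)"
  defines "c \<equiv> Delta f s t u - 2 * (2 * H * (4*g) powr \<mu>)"
  shows "c > 0 \<longrightarrow> ennreal (g^3 * (c powr p / (2*(u-s)) powr (\<mu> * p + 3))) \<le> int_mid_pow \<mu> p f"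
proof
  assume c0: "c > 0"
  let ?R = "2 * H * (4*g) powr \<mu>"
  let ?r = "H * (4*g) powr \<mu>"
  have g0: "g > 0" using eta st unfolding g_def by simp
  have gh: "4 * g \<le> u - s" using eta st unfolding g_def by (simp add: mult_right_mono)
  have g4: "g \<le> 1/4" using gh st by linarith
  have r0: "0 \<le> ?r" using Rnn g0 by simp
  have d1: "c + 2 * ?R \<le> dist (f s) (f t)" and d2: "c + 2 * ?R \<le> dist (f t) (f u)"
    unfolding c_def Delta_def by auto
  have D: "2 * (u - s) > 0" using st by simp
  have s0: "0 \<le> s" and s1: "s \<le> 1" and t0: "0 \<le> t" and t1: "t \<le> 1" and u0: "0 \<le> u" and u1: "u \<le> 1"
    using st by linarith+
  consider "t - s < 2*g" | "u - t < 2*g" | "2*g \<le> t - s" "2*g \<le> u - t" by linarith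
  then show "ennreal (g^3 * (c powr p / (2*(u-s)) powr (\<mu> * p + 3))) \<le> int_mid_pow \<mu> p f"
  proof cases
    case 1
    show ?thesis
    proof (cases "s < g")
      case True
      have "dist (f s) (f t) \<le> dist (f 0) (f s) + dist (f 0) (f t)" by (metis dist_triangle dist_commute)
      also have "\<dots> \<le> ?r + ?r" using True 1 st g0 by (intro add_mono hl) auto
      finally show ?thesis using d1 c0 r0 by simp
    next
      case False
      obtain a3 where a3: "0 \<le> a3" "a3 + g \<le> 1" "u - g \<le> a3" "a3 \<le> u"
        and A3: "\<forall>x\<in>{a3<..<a3+g}. dist (f u) (f x) \<le> ?R"
        using good_interval[OF g0 g4, of u] st by auto
      show ?thesis
      proof (rule combine[OF g0 less_imp_le[OF c0] D \<open>p>0\<close>, of "s-g" t a3 s ?R t u])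
        fix x assume x: "x \<in> {s-g<..<s-g+g}"
        have "min (dist (f x) (f s)) (dist (f s) (f t)) \<le> ?r"
          using x False st 1 by (intro hm) auto
        then show "dist (f s) (f x) \<le> ?R" using d1 c0 r0 by (auto simp: dist_commute min_le_iff_disj)
      next
        fix x assume x: "x \<in> {t<..<t+g}"
        have "min (dist (f s) (f t)) (dist (f t) (f x)) \<le> ?r"
          using x False st 1 a3 gh by (intro hm) auto
        then show "dist (f t) (f x) \<le> ?R" using d1 c0 r0 by (auto simp: min_le_iff_disj)
      qed (use A3 a3 False st 1 gh d1 d2 in auto)
    qed
  next
    case 2
    show ?thesis
    proof (cases "u > 1 - g")
      case True
      have "dist (f t) (f u) \<le> dist (f 1) (f t) + dist (f 1) (f u)" by (metis dist_triangle dist_commute)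
      also have "\<dots> \<le> ?r + ?r" using True 2 st g0 by (intro add_mono hr) auto
      finally show ?thesis using d2 c0 r0 by simp
    next
      case False
      obtain a1 where a1: "0 \<le> a1" "a1 + g \<le> 1" "s - g \<le> a1" "a1 \<le> s"
        and A1: "\<forall>x\<in>{a1<..<a1+g}. dist (f s) (f x) \<le> ?R"
        using good_interval[OF g0 g4, of s] st by auto
      show ?thesis
      proof (rule combine[OF g0 less_imp_le[OF c0] D \<open>p>0\<close>, of a1 "t-g" u s ?R t u])
        fix x assume x: "x \<in> {t-g<..<t-g+g}"
        have "min (dist (f x) (f t)) (dist (f t) (f u)) \<le> ?r"
          using x False st 2 a1 gh by (intro hm) auto
        then show "dist (f t) (f x) \<le> ?R" using d2 c0 r0 by (auto simp: dist_commute min_le_iff_disj)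
      next
        fix x assume x: "x \<in> {u<..<u+g}"
        have "min (dist (f t) (f u)) (dist (f u) (f x)) \<le> ?r"
          using x False st 2 by (intro hm) auto
        then show "dist (f u) (f x) \<le> ?R" using d2 c0 r0 by (auto simp: min_le_iff_disj)
      qed (use A1 a1 False st 2 gh d1 d2 in auto)
    qed
  next
    case 3
    obtain a1 where a1: "0 \<le> a1" "a1 + g \<le> 1" "s - g \<le> a1" "a1 \<le> s"
      and A1: "\<forall>x\<in>{a1<..<a1+g}. dist (f s) (f x) \<le> ?R"
      using good_interval[OF g0 g4, of s] st by auto
    obtain a2 where a2: "0 \<le> a2" "a2 + g \<le> 1" "t - g \<le> a2" "a2 \<le> t"
      and A2: "\<forall>x\<in>{a2<..<a2+g}. dist (f t) (f x) \<le> ?R"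
      using good_interval[OF g0 g4, of t] st by auto
    obtain a3 where a3: "0 \<le> a3" "a3 + g \<le> 1" "u - g \<le> a3" "a3 \<le> u"
      and A3: "\<forall>x\<in>{a3<..<a3+g}. dist (f u) (f x) \<le> ?R"
      using good_interval[OF g0 g4, of u] st by auto
    have o5: "a3 + g - a1 \<le> 2 * (u - s)"
      using a3(4) a1(3) gh g0 by (smt (verit))
    have o: "0 \<le> a1" "a1 + g \<le> a2" "a2 + g \<le> a3" "a3 + g \<le> 1" "a3 + g - a1 \<le> 2 * (u - s)"
      using a1 a2 a3 st 3 gh g0 o5 by linarith+
    show ?thesis
      by (rule combine[OF g0 less_imp_le[OF c0] D \<open>p>0\<close> o _ _ _ d1 d2]) (use A1 A2 A3 in blast)+
  qed
qed


lemma left_case: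
  assumes eta: "0 < \<eta>" "\<eta> \<le> 1/4" and "p > 0" and t: "0 < t" "t \<le> 1"
  defines "g \<equiv> \<eta> * t"
  defines "c \<equiv> dist (f 0) (f t) - 2 * H * (4*g) powr \<mu>"
  shows "c > 0 \<longrightarrow> ennreal (g * (c powr p / (2*t) powr (\<mu> * p + 1))) \<le> int_left_pow \<mu> p f"
proof
  assume c0: "c > 0"
  have g0: "g > 0" using eta t unfolding g_def by simp
  have gh: "4 * g \<le> t" using eta t unfolding g_def by (simp add: mult_right_mono)
  have g4: "g \<le> 1/4" using gh t by linarith
  obtain a where a: "0 \<le> a" "a + g \<le> 1" "t - g \<le> a" "a \<le> t"
    and A: "\<forall>x\<in>{a<..<a+g}. dist (f t) (f x) \<le> 2 * H * (4*g) powr \<mu>"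
    using good_interval[OF g0 g4, of t] t by auto
  have o: "a + g \<le> 2 * t" using a gh g0 by (smt (verit))
  show "ennreal (g * (c powr p / (2*t) powr (\<mu> * p + 1))) \<le> int_left_pow \<mu> p f"
  proof (rule left_lower[OF g0 less_imp_le[OF c0] \<open>p>0\<close> mu a(1) a(2) o])
    fix x assume x: "x \<in> {a<..<a+g}"
    have "dist (f 0) (f t) \<le> dist (f 0) (f x) + dist (f x) (f t)" by (rule dist_triangle)
    moreover have "dist (f t) (f x) \<le> 2 * H * (4*g) powr \<mu>" using A x by blast
    ultimately show "c \<le> dist (f 0) (f x)" unfolding c_def by (simp add: dist_commute)
  qed
qed

lemma right_case:
  assumes eta: "0 < \<eta>" "\<eta> \<le> 1/4" and "p > 0" and t: "0 \<le> t" "t < 1"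
  defines "g \<equiv> \<eta> * (1 - t)"
  defines "c \<equiv> dist (f 1) (f t) - 2 * H * (4*g) powr \<mu>"
  shows "c > 0 \<longrightarrow> ennreal (g * (c powr p / (2*(1-t)) powr (\<mu> * p + 1))) \<le> int_right_pow \<mu> p f"
proof
  assume c0: "c > 0"
  have g0: "g > 0" using eta t unfolding g_def by simp
  have gh: "4 * g \<le> 1 - t" using eta t unfolding g_def by (simp add: mult_right_mono)
  have g4: "g \<le> 1/4" using gh t by linarith
  obtain a where a: "0 \<le> a" "a + g \<le> 1" "t - g \<le> a" "a \<le> t"
    and A: "\<forall>x\<in>{a<..<a+g}. dist (f t) (f x) \<le> 2 * H * (4*g) powr \<mu>"
    using good_interval[OF g0 g4, of t] t by auto
  have o: "1 - a \<le> 2 * (1 - t)" using a gh g0 by (smt (verit))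
  show "ennreal (g * (c powr p / (2*(1-t)) powr (\<mu> * p + 1))) \<le> int_right_pow \<mu> p f"
  proof (rule right_lower[OF g0 less_imp_le[OF c0] \<open>p>0\<close> mu a(1) a(2) o])
    fix x assume x: "x \<in> {a<..<a+g}"
    have "dist (f 1) (f t) \<le> dist (f 1) (f x) + dist (f x) (f t)" by (rule dist_triangle)
    moreover have "dist (f t) (f x) \<le> 2 * H * (4*g) powr \<mu>" using A x by blast
    ultimately show "c \<le> dist (f 1) (f x)" unfolding c_def by (simp add: dist_commute)
  qed
qed

end



lemma pow_conv:
  fixes c X h p \<mu> :: real
  assumes "p > 0" "c > 0" "X \<ge> 0" "h > 0" "c powr p \<le> X * h powr (\<mu> * p)"
  shows "c \<le> X powr (1/p) * h powr \<mu>"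
proof -
  have "c = (c powr p) powr (1/p)" using assms by (simp add: powr_powr)
  also have "\<dots> \<le> (X * h powr (\<mu> * p)) powr (1/p)" using assms by (intro powr_mono2) auto
  also have "\<dots> = X powr (1/p) * (h powr (\<mu> * p)) powr (1/p)" using assms by (simp add: powr_mult)
  also have "(h powr (\<mu> * p)) powr (1/p) = h powr \<mu>" using assms by (simp add: powr_powr)
  finally show ?thesis .
qed

lemma alg_mid:
  fixes c m h p \<mu> \<eta> :: real
  assumes "p > 0" "\<eta> > 0" "h > 0" "c > 0"
    and le: "(\<eta>*h)^3 * (c powr p / (2*h) powr (\<mu>*p+3)) \<le> m"
  shows "c powr p \<le> (m * 2 powr (\<mu>*p+3) / \<eta>^3) * h powr (\<mu>*p)"
proof -
  have e: "(2*h) powr (\<mu>*p+3) = 2 powr (\<mu>*p+3) * (h powr (\<mu>*p) * h^3)"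
    using assms by (simp add: powr_mult powr_add powr_realpow)
  have p2: "2 powr (\<mu>*p+3) > 0" "h powr (\<mu>*p) > 0" using assms by auto
  have "(\<eta>*h)^3 * (c powr p / (2*h) powr (\<mu>*p+3)) = (\<eta>^3 * c powr p) / (2 powr (\<mu>*p+3) * h powr (\<mu>*p))"
    unfolding e using assms p2 by (simp add: power_mult_distrib field_simps)
  with le have "(\<eta>^3 * c powr p) / (2 powr (\<mu>*p+3) * h powr (\<mu>*p)) \<le> m" by simp
  then have "\<eta>^3 * c powr p \<le> m * (2 powr (\<mu>*p+3) * h powr (\<mu>*p))"
    using p2 by (simp add: pos_divide_le_eq)
  then show ?thesis using assms by (simp add: field_simps)
qed

lemma alg_side:
  fixes c m h p \<mu> \<eta> :: real
  assumes "p > 0" "\<eta> > 0" "h > 0" "c > 0"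
    and le: "(\<eta>*h) * (c powr p / (2*h) powr (\<mu>*p+1)) \<le> m"
  shows "c powr p \<le> (m * 2 powr (\<mu>*p+1) / \<eta>) * h powr (\<mu>*p)"
proof -
  have e: "(2*h) powr (\<mu>*p+1) = 2 powr (\<mu>*p+1) * (h powr (\<mu>*p) * h)"
    using assms by (simp add: powr_mult powr_add)
  have p2: "2 powr (\<mu>*p+1) > 0" "h powr (\<mu>*p) > 0" using assms by auto
  have "(\<eta>*h) * (c powr p / (2*h) powr (\<mu>*p+1)) = (\<eta> * c powr p) / (2 powr (\<mu>*p+1) * h powr (\<mu>*p))"
    unfolding e using assms p2 by (simp add: field_simps)
  with le have "(\<eta> * c powr p) / (2 powr (\<mu>*p+1) * h powr (\<mu>*p)) \<le> m" by simp
  then have "\<eta> * c powr p \<le> m * (2 powr (\<mu>*p+1) * h powr (\<mu>*p))"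
    using p2 by (simp add: pos_divide_le_eq)
  then show ?thesis using assms by (simp add: field_simps)
qed

lemma enn_le:
  assumes "ennreal x \<le> M" "M < \<infinity>" shows "x \<le> enn2real M"
proof (cases "x \<le> 0")
  case True then show ?thesis using enn2real_nonneg[of M] by linarith
next
  case False
  have "enn2real (ennreal x) \<le> enn2real M" using assms by (intro enn2real_mono) auto
  then show ?thesis using False by simp
qed




context hctx begin

lemma mid_pt:
  assumes eta: "0 < \<eta>" "\<eta> \<le> 1/4" and p: "p > 0" and M: "int_mid_pow \<mu> p f < \<infinity>"
    and st: "0 \<le> s" "s \<le> t" "t \<le> u" "u \<le> 1" "s < u"
  shows "Delta f s t u \<le> (4*H*(4*\<eta>) powr \<mu> + (enn2real (int_mid_pow \<mu> p f) * 2 powr (\<mu>*p+3)/\<eta>^3) powr (1/p)) * (u-s) powr \<mu>"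
proof -
  define h where "h = u - s"
  define g where "g = \<eta> * h"
  define c where "c = Delta f s t u - 2 * (2 * H * (4*g) powr \<mu>)"
  define m where "m = enn2real (int_mid_pow \<mu> p f)"
  define X where "X = m * 2 powr (\<mu>*p+3)/\<eta>^3"
  have h0: "h > 0" using st h_def by simp
  have m0: "m \<ge> 0" unfolding m_def by simp
  have X0: "X \<ge> 0" unfolding X_def using m0 eta by simp
  have e4: "(4*g) powr \<mu> = (4*\<eta>) powr \<mu> * h powr \<mu>"
    unfolding g_def using eta h0 by (simp add: powr_mult[symmetric] mult.assoc)
  have Dc: "Delta f s t u = c + 4*H*(4*\<eta>) powr \<mu> * h powr \<mu>"
    unfolding c_def e4 by simp
  have "c \<le> X powr (1/p) * h powr \<mu>"
  proof (cases "c > 0")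
    case False
    then show ?thesis using X0 h0 by (smt (verit) mult_nonneg_nonneg powr_ge_zero)
  next
    case True
    have "ennreal (g^3 * (c powr p / (2*(u-s)) powr (\<mu> * p + 3))) \<le> int_mid_pow \<mu> p f"
      using mid_case[OF eta p st] True unfolding c_def g_def h_def by blast
    then have "g^3 * (c powr p / (2*h) powr (\<mu> * p + 3)) \<le> m"
      unfolding m_def h_def using M by (rule enn_le)
    then have "c powr p \<le> X * h powr (\<mu>*p)"
      unfolding X_def g_def by (rule alg_mid[OF p eta(1) h0 True])
    then show ?thesis by (rule pow_conv[OF p True X0 h0])
  qed
  then show ?thesis unfolding Dc X_def m_def h_def by (simp add: algebra_simps)
qed

lemma left_pt:
  assumes eta: "0 < \<eta>" "\<eta> \<le> 1/4" and p: "p > 0" and M: "int_left_pow \<mu> p f < \<infinity>"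
    and t: "0 < t" "t \<le> 1"
  shows "dist (f 0) (f t) \<le> (2*H*(4*\<eta>) powr \<mu> + (enn2real (int_left_pow \<mu> p f) * 2 powr (\<mu>*p+1)/\<eta>) powr (1/p)) * t powr \<mu>"
proof -
  define h where "h = t"
  define g where "g = \<eta> * h"
  define c where "c = dist (f 0) (f t) - 2 * H * (4*g) powr \<mu>"
  define m where "m = enn2real (int_left_pow \<mu> p f)"
  define X where "X = m * 2 powr (\<mu>*p+1)/\<eta>"
  have h0: "h > 0" using t h_def by simp
  have m0: "m \<ge> 0" unfolding m_def by simp
  have X0: "X \<ge> 0" unfolding X_def using m0 eta by simp
  have e4: "(4*g) powr \<mu> = (4*\<eta>) powr \<mu> * h powr \<mu>"
    unfolding g_def using eta h0 by (simp add: powr_mult[symmetric] mult.assoc)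
  have Dc: "dist (f 0) (f t) = c + 2*H*(4*\<eta>) powr \<mu> * h powr \<mu>"
    unfolding c_def e4 by simp
  have "c \<le> X powr (1/p) * h powr \<mu>"
  proof (cases "c > 0")
    case False
    then show ?thesis using X0 h0 by (smt (verit) mult_nonneg_nonneg powr_ge_zero)
  next
    case True
    have "ennreal (g * (c powr p / (2*t) powr (\<mu> * p + 1))) \<le> int_left_pow \<mu> p f"
      using left_case[OF eta p t] True unfolding c_def g_def h_def by blast
    then have "g * (c powr p / (2*h) powr (\<mu> * p + 1)) \<le> m"
      unfolding m_def h_def using M by (rule enn_le)
    then have "c powr p \<le> X * h powr (\<mu>*p)"
      unfolding X_def g_def by (rule alg_side[OF p eta(1) h0 True])
    then show ?thesis by (rule pow_conv[OF p True X0 h0])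
  qed
  then show ?thesis unfolding Dc X_def m_def h_def by (simp add: algebra_simps)
qed

lemma right_pt:
  assumes eta: "0 < \<eta>" "\<eta> \<le> 1/4" and p: "p > 0" and M: "int_right_pow \<mu> p f < \<infinity>"
    and t: "0 \<le> t" "t < 1"
  shows "dist (f 1) (f t) \<le> (2*H*(4*\<eta>) powr \<mu> + (enn2real (int_right_pow \<mu> p f) * 2 powr (\<mu>*p+1)/\<eta>) powr (1/p)) * (1-t) powr \<mu>"
proof -
  define h where "h = 1 - t"
  define g where "g = \<eta> * h"
  define c where "c = dist (f 1) (f t) - 2 * H * (4*g) powr \<mu>"
  define m where "m = enn2real (int_right_pow \<mu> p f)"
  define X where "X = m * 2 powr (\<mu>*p+1)/\<eta>"
  have h0: "h > 0" using t h_def by simp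
  have m0: "m \<ge> 0" unfolding m_def by simp
  have X0: "X \<ge> 0" unfolding X_def using m0 eta by simp
  have e4: "(4*g) powr \<mu> = (4*\<eta>) powr \<mu> * h powr \<mu>"
    unfolding g_def using eta h0 by (simp add: powr_mult[symmetric] mult.assoc)
  have Dc: "dist (f 1) (f t) = c + 2*H*(4*\<eta>) powr \<mu> * h powr \<mu>"
    unfolding c_def e4 by simp
  have "c \<le> X powr (1/p) * h powr \<mu>"
  proof (cases "c > 0")
    case False
    then show ?thesis using X0 h0 by (smt (verit) mult_nonneg_nonneg powr_ge_zero)
  next
    case True
    have "ennreal (g * (c powr p / (2*(1-t)) powr (\<mu> * p + 1))) \<le> int_right_pow \<mu> p f"
      using right_case[OF eta p t] True unfolding c_def g_def h_def by blast
    then have "g * (c powr p / (2*h) powr (\<mu> * p + 1)) \<le> m"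
      unfolding m_def h_def using M by (rule enn_le)
    then have "c powr p \<le> X * h powr (\<mu>*p)"
      unfolding X_def g_def by (rule alg_side[OF p eta(1) h0 True])
    then show ?thesis by (rule pow_conv[OF p True X0 h0])
  qed
  then show ?thesis unfolding Dc X_def m_def h_def by (simp add: algebra_simps)
qed

end



lemma Dmu_facts:
  assumes "f \<in> Dmu \<mu>"
  shows "bdd_above (hol_mid_set \<mu> f)" "bdd_above (hol_left_set \<mu> f)" "bdd_above (hol_right_set \<mu> f)"
  using assms unfolding Dmu_def by auto

lemma hm_bound:
  assumes "f \<in> Dmu \<mu>" "\<mu> > 0" "0 \<le> x" "x \<le> y" "y \<le> z" "z \<le> 1" "x < z"
  shows "Delta f x y z \<le> hol_mid \<mu> f * (z - x) powr \<mu>"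
proof -
  have "Delta f x y z / \<bar>z - x\<bar> powr \<mu> \<in> hol_mid_set \<mu> f"
    unfolding hol_mid_set_def using assms by (intro CollectI exI[of _ x] exI[of _ y] exI[of _ z] conjI) auto
  then have "Delta f x y z / \<bar>z - x\<bar> powr \<mu> \<le> hol_mid \<mu> f"
    unfolding hol_mid_def by (rule cSup_upper) (rule Dmu_facts[OF assms(1)])
  then show ?thesis using assms by (simp add: pos_divide_le_eq)
qed

lemma hl_bound:
  assumes "f \<in> Dmu \<mu>" "\<mu> > 0" "0 < x" "x \<le> 1"
  shows "dist (f 0) (f x) \<le> hol_left \<mu> f * x powr \<mu>"
proof -
  have "dist (f 0) (f x) / x powr \<mu> \<in> hol_left_set \<mu> f"
    unfolding hol_left_set_def using assms by (intro CollectI exI[of _ x] conjI) auto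
  then have "dist (f 0) (f x) / x powr \<mu> \<le> hol_left \<mu> f"
    unfolding hol_left_def by (rule cSup_upper) (rule Dmu_facts[OF assms(1)])
  then show ?thesis using assms by (simp add: pos_divide_le_eq)
qed

lemma hr_bound:
  assumes "f \<in> Dmu \<mu>" "\<mu> > 0" "0 \<le> x" "x < 1"
  shows "dist (f 1) (f x) \<le> hol_right \<mu> f * (1 - x) powr \<mu>"
proof -
  have "dist (f 1) (f x) / \<bar>1 - x\<bar> powr \<mu> \<in> hol_right_set \<mu> f"
    unfolding hol_right_set_def using assms by (intro CollectI exI[of _ x] conjI) auto
  then have "dist (f 1) (f x) / \<bar>1 - x\<bar> powr \<mu> \<le> hol_right \<mu> f"
    unfolding hol_right_def by (rule cSup_upper) (rule Dmu_facts[OF assms(1)])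
  then show ?thesis using assms by (simp add: pos_divide_le_eq)
qed

lemma hol_nonneg:
  assumes "f \<in> Dmu \<mu>" "\<mu> > 0"
  shows "hol_mid \<mu> f \<ge> 0" "hol_left \<mu> f \<ge> 0" "hol_right \<mu> f \<ge> 0"
proof -
  have "Delta f 0 0 0 / \<bar>0 - 0\<bar> powr \<mu> \<in> hol_mid_set \<mu> f"
    unfolding hol_mid_set_def by (intro CollectI exI[of _ 0] conjI) auto
  then have "Delta f 0 0 0 / \<bar>0 - 0\<bar> powr \<mu> \<le> hol_mid \<mu> f"
    unfolding hol_mid_def by (rule cSup_upper) (rule Dmu_facts[OF assms(1)])
  then show "hol_mid \<mu> f \<ge> 0" by simp
  have "dist (f 0) (f 1) / 1 powr \<mu> \<in> hol_left_set \<mu> f"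
    unfolding hol_left_set_def by (intro CollectI exI[of _ 1] conjI) auto
  then have "dist (f 0) (f 1) / 1 powr \<mu> \<le> hol_left \<mu> f"
    unfolding hol_left_def by (rule cSup_upper) (rule Dmu_facts[OF assms(1)])
  then have "dist (f 0) (f 1) \<le> hol_left \<mu> f" by simp
  then show "hol_left \<mu> f \<ge> 0" using zero_le_dist[of "f 0" "f 1"] by linarith
  have "dist (f 1) (f 0) / \<bar>1 - 0\<bar> powr \<mu> \<in> hol_right_set \<mu> f"
    unfolding hol_right_set_def by (intro CollectI exI[of _ 0] conjI) auto
  then have "dist (f 1) (f 0) / \<bar>1 - 0\<bar> powr \<mu> \<le> hol_right \<mu> f"
    unfolding hol_right_def by (rule cSup_upper) (rule Dmu_facts[OF assms(1)])
  then have "dist (f 1) (f 0) \<le> hol_right \<mu> f" by simp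
  then show "hol_right \<mu> f \<ge> 0" using zero_le_dist[of "f 1" "f 0"] by linarith
qed

lemma hctx_Dmu:
  assumes f: "f \<in> Dmu \<mu>" and mu: "\<mu> > 0"
  shows "hctx f (hol_mid \<mu> f + hol_left \<mu> f + hol_right \<mu> f) \<mu>"
proof
  note nn = hol_nonneg[OF f mu]
  let ?H = "hol_mid \<mu> f + hol_left \<mu> f + hol_right \<mu> f"
  show "0 \<le> ?H" using nn by simp
  show "0 < \<mu>" by fact
  fix x y z w :: real
  assume a: "0 \<le> x" "x \<le> y" "y \<le> z" "z \<le> 1" "z - x \<le> w"
  show "min (dist (f x) (f y)) (dist (f y) (f z)) \<le> ?H * w powr \<mu>"
  proof (cases "x < z")
    case True
    have "min (dist (f x) (f y)) (dist (f y) (f z)) \<le> hol_mid \<mu> f * (z - x) powr \<mu>"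
      using hm_bound[OF f mu a(1-4) True] unfolding Delta_def .
    also have "\<dots> \<le> hol_mid \<mu> f * w powr \<mu>"
      using nn a True mu by (intro mult_left_mono powr_mono2) auto
    also have "\<dots> \<le> ?H * w powr \<mu>" using nn by (intro mult_right_mono) auto
    finally show ?thesis .
  next
    case False
    then have "x = y" "y = z" using a by auto
    then show ?thesis using nn by simp
  qed
next
  note nn = hol_nonneg[OF f mu]
  let ?H = "hol_mid \<mu> f + hol_left \<mu> f + hol_right \<mu> f"
  fix x w :: real
  assume a: "0 \<le> x" "x \<le> 1" "x \<le> w"
  show "dist (f 0) (f x) \<le> ?H * w powr \<mu>"
  proof (cases "x > 0")
    case True
    have "dist (f 0) (f x) \<le> hol_left \<mu> f * x powr \<mu>" using hl_bound[OF f mu True a(2)] .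
    also have "\<dots> \<le> hol_left \<mu> f * w powr \<mu>"
      using nn a True mu by (intro mult_left_mono powr_mono2) auto
    also have "\<dots> \<le> ?H * w powr \<mu>" using nn by (intro mult_right_mono) auto
    finally show ?thesis .
  next
    case False
    then have "x = 0" using a by auto
    then show ?thesis using nn by simp
  qed
next
  note nn = hol_nonneg[OF f mu]
  let ?H = "hol_mid \<mu> f + hol_left \<mu> f + hol_right \<mu> f"
  fix x w :: real
  assume a: "0 \<le> x" "x \<le> 1" "1 - x \<le> w"
  show "dist (f 1) (f x) \<le> ?H * w powr \<mu>"
  proof (cases "x < 1")
    case True
    have "dist (f 1) (f x) \<le> hol_right \<mu> f * (1 - x) powr \<mu>" using hr_bound[OF f mu a(1) True] .
    also have "\<dots> \<le> hol_right \<mu> f * w powr \<mu>"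
      using nn a True mu by (intro mult_left_mono powr_mono2) auto
    also have "\<dots> \<le> ?H * w powr \<mu>" using nn by (intro mult_right_mono) auto
    finally show ?thesis .
  next
    case False
    then have "x = 1" using a by auto
    then show ?thesis using nn by simp
  qed
qed




lemma holmid_le:
  fixes f :: "real \<Rightarrow> 'a::metric_space"
  assumes f: "f \<in> Dmu \<mu>" and mu: "\<mu> > 0" and p: "p > 0" and eta: "0 < \<eta>" "\<eta> \<le> 1/4"
    and M: "int_mid_pow \<mu> p f < \<infinity>"
  shows "hol_mid \<mu> f \<le> 4*(hol_mid \<mu> f + hol_left \<mu> f + hol_right \<mu> f)*(4*\<eta>) powr \<mu>
      + (enn2real (int_mid_pow \<mu> p f) * 2 powr (\<mu>*p+3)/\<eta>^3) powr (1/p)"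
    (is "_ \<le> ?B")
proof -
  interpret hctx f "hol_mid \<mu> f + hol_left \<mu> f + hol_right \<mu> f" \<mu> by (rule hctx_Dmu[OF f mu])
  have B0: "?B \<ge> 0" using Hnn by simp
  have ne: "hol_mid_set \<mu> f \<noteq> {}"
    unfolding hol_mid_set_def by (intro ex_in_conv[THEN iffD1] exI[of _ 0] CollectI exI conjI) auto
  have "Sup (hol_mid_set \<mu> f) \<le> ?B"
  proof (rule cSup_least[OF ne])
    fix v assume "v \<in> hol_mid_set \<mu> f"
    then obtain s t u where v: "v = Delta f s t u / \<bar>u - s\<bar> powr \<mu>" and st: "0 \<le> s" "s \<le> t" "t \<le> u" "u \<le> 1"
      unfolding hol_mid_set_def by blast
    show "v \<le> ?B"
    proof (cases "s < u")
      case True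
      have "Delta f s t u \<le> ?B * (u - s) powr \<mu>"
        using mid_pt[OF eta p M st True] by (simp add: algebra_simps)
      then show ?thesis using True v by (simp add: pos_divide_le_eq)
    next
      case False
      then have "u = s" using st by linarith
      then show ?thesis using v B0 by simp
    qed
  qed
  then show ?thesis unfolding hol_mid_def .
qed

lemma holleft_le:
  fixes f :: "real \<Rightarrow> 'a::metric_space"
  assumes f: "f \<in> Dmu \<mu>" and mu: "\<mu> > 0" and p: "p > 0" and eta: "0 < \<eta>" "\<eta> \<le> 1/4"
    and M: "int_left_pow \<mu> p f < \<infinity>"
  shows "hol_left \<mu> f \<le> 2*(hol_mid \<mu> f + hol_left \<mu> f + hol_right \<mu> f)*(4*\<eta>) powr \<mu>
      + (enn2real (int_left_pow \<mu> p f) * 2 powr (\<mu>*p+1)/\<eta>) powr (1/p)"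
    (is "_ \<le> ?B")
proof -
  interpret hctx f "hol_mid \<mu> f + hol_left \<mu> f + hol_right \<mu> f" \<mu> by (rule hctx_Dmu[OF f mu])
  have "dist (f 0) (f 1) / 1 powr \<mu> \<in> hol_left_set \<mu> f"
    unfolding hol_left_set_def by (intro CollectI exI[of _ 1] conjI) auto
  then have ne: "hol_left_set \<mu> f \<noteq> {}" by auto
  have "Sup (hol_left_set \<mu> f) \<le> ?B"
  proof (rule cSup_least[OF ne])
    fix v assume "v \<in> hol_left_set \<mu> f"
    then obtain t where v: "v = dist (f 0) (f t) / t powr \<mu>" and t: "0 < t" "t \<le> 1"
      unfolding hol_left_set_def by auto
    have "dist (f 0) (f t) \<le> ?B * t powr \<mu>"
      using left_pt[OF eta p M t] by (simp add: algebra_simps)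
    then show "v \<le> ?B" using t v by (simp add: pos_divide_le_eq)
  qed
  then show ?thesis unfolding hol_left_def .
qed

lemma holright_le:
  fixes f :: "real \<Rightarrow> 'a::metric_space"
  assumes f: "f \<in> Dmu \<mu>" and mu: "\<mu> > 0" and p: "p > 0" and eta: "0 < \<eta>" "\<eta> \<le> 1/4"
    and M: "int_right_pow \<mu> p f < \<infinity>"
  shows "hol_right \<mu> f \<le> 2*(hol_mid \<mu> f + hol_left \<mu> f + hol_right \<mu> f)*(4*\<eta>) powr \<mu>
      + (enn2real (int_right_pow \<mu> p f) * 2 powr (\<mu>*p+1)/\<eta>) powr (1/p)"
    (is "_ \<le> ?B")
proof -
  interpret hctx f "hol_mid \<mu> f + hol_left \<mu> f + hol_right \<mu> f" \<mu> by (rule hctx_Dmu[OF f mu])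
  have "dist (f 1) (f 0) / \<bar>1 - 0\<bar> powr \<mu> \<in> hol_right_set \<mu> f"
    unfolding hol_right_set_def by (intro CollectI exI[of _ 0] conjI) auto
  then have ne: "hol_right_set \<mu> f \<noteq> {}" by auto
  have "Sup (hol_right_set \<mu> f) \<le> ?B"
  proof (rule cSup_least[OF ne])
    fix v assume "v \<in> hol_right_set \<mu> f"
    then obtain t where v: "v = dist (f 1) (f t) / \<bar>1 - t\<bar> powr \<mu>" and t: "0 \<le> t" "t < 1"
      unfolding hol_right_set_def by auto
    have "dist (f 1) (f t) \<le> ?B * (1 - t) powr \<mu>"
      using right_pt[OF eta p M t] by (simp add: algebra_simps)
    then show "v \<le> ?B" using t v by (simp add: pos_divide_le_eq)
  qed
  then show ?thesis unfolding hol_right_def .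
qed




definition eta0 :: "real \<Rightarrow> real" where "eta0 \<mu> = (1/48) powr (1/\<mu>) / 4"

definition Cst :: "real \<Rightarrow> real \<Rightarrow> real" where
  "Cst \<mu> p = 2 * ((2 powr (\<mu>*p+3)/eta0 \<mu>^3) powr (1/p) + (2 powr (\<mu>*p+1)/eta0 \<mu>) powr (1/p))"

lemma eta0_props:
  assumes "\<mu> > 0"
  shows "0 < eta0 \<mu>" "eta0 \<mu> \<le> 1/4" "(4 * eta0 \<mu>) powr \<mu> = 1/48"
proof -
  show "0 < eta0 \<mu>" unfolding eta0_def by simp
  have "(1/48::real) powr (1/\<mu>) \<le> 1" by (rule powr_le1) (use assms in auto)
  then show "eta0 \<mu> \<le> 1/4" unfolding eta0_def by simp
  have "(4 * eta0 \<mu>) powr \<mu> = ((1/48) powr (1/\<mu>)) powr \<mu>" unfolding eta0_def by simp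
  also have "\<dots> = 1/48" using assms by (simp add: powr_powr)
  finally show "(4 * eta0 \<mu>) powr \<mu> = 1/48" .
qed

lemma Cst_nonneg: "Cst \<mu> p \<ge> 0" unfolding Cst_def by simp

lemma split_powr:
  fixes m a p :: real assumes "m \<ge> 0" "a \<ge> 0"
  shows "(m * a) powr (1/p) = m powr (1/p) * a powr (1/p)"
  using assms by (simp add: powr_mult)

lemma lin1: "(H::real) \<le> H/6 + S \<Longrightarrow> 0 \<le> S \<Longrightarrow> H \<le> 2*S" by linarith

lemma main_bound:
  fixes f :: "real \<Rightarrow> 'a::metric_space"
  assumes f: "f \<in> Dmu \<mu>" and mu: "\<mu> > 0" and p: "p > 0"
    and M: "int_mid_pow \<mu> p f < \<infinity>" and L: "int_left_pow \<mu> p f < \<infinity>" and R: "int_right_pow \<mu> p f < \<infinity>"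
  shows "hol_mid \<mu> f + hol_left \<mu> f + hol_right \<mu> f \<le> Cst \<mu> p *
     (enn2real (int_mid_pow \<mu> p f) powr (1/p) + enn2real (int_left_pow \<mu> p f) powr (1/p)
                + enn2real (int_right_pow \<mu> p f) powr (1/p))"
proof -
  note e = eta0_props[OF mu]
  define \<eta> where "\<eta> = eta0 \<mu>"
  define H where "H = hol_mid \<mu> f + hol_left \<mu> f + hol_right \<mu> f"
  define m where "m = enn2real (int_mid_pow \<mu> p f)"
  define l where "l = enn2real (int_left_pow \<mu> p f)"
  define r where "r = enn2real (int_right_pow \<mu> p f)"
  define Am where "Am = (2 powr (\<mu>*p+3)/\<eta>^3) powr (1/p)"
  define Al where "Al = (2 powr (\<mu>*p+1)/\<eta>) powr (1/p)"
  have eta: "0 < \<eta>" "\<eta> \<le> 1/4" "(4*\<eta>) powr \<mu> = 1/48" using e unfolding \<eta>_def by auto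
  have m0: "m \<ge> 0" "l \<ge> 0" "r \<ge> 0" unfolding m_def l_def r_def by auto
  have A0: "Am \<ge> 0" "Al \<ge> 0" unfolding Am_def Al_def by auto
  have sm: "(m * 2 powr (\<mu>*p+3)/\<eta>^3) powr (1/p) = m powr (1/p) * Am"
    unfolding Am_def using split_powr[OF m0(1), of "2 powr (\<mu>*p+3)/\<eta>^3" p] eta by (simp add: mult.assoc)
  have sl: "(l * 2 powr (\<mu>*p+1)/\<eta>) powr (1/p) = l powr (1/p) * Al"
    unfolding Al_def using split_powr[OF m0(2), of "2 powr (\<mu>*p+1)/\<eta>" p] eta by (simp add: mult.assoc)
  have sr: "(r * 2 powr (\<mu>*p+1)/\<eta>) powr (1/p) = r powr (1/p) * Al"
    unfolding Al_def using split_powr[OF m0(3), of "2 powr (\<mu>*p+1)/\<eta>" p] eta by (simp add: mult.assoc)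
  have b1: "hol_mid \<mu> f \<le> 4*H*(1/48) + m powr (1/p) * Am"
    using holmid_le[OF f mu p eta(1,2) M] eta(3) sm unfolding H_def m_def by simp
  have b2: "hol_left \<mu> f \<le> 2*H*(1/48) + l powr (1/p) * Al"
    using holleft_le[OF f mu p eta(1,2) L] eta(3) sl unfolding H_def l_def by simp
  have b3: "hol_right \<mu> f \<le> 2*H*(1/48) + r powr (1/p) * Al"
    using holright_le[OF f mu p eta(1,2) R] eta(3) sr unfolding H_def r_def by simp
  have H1: "H \<le> 2 * (m powr (1/p) * Am + l powr (1/p) * Al + r powr (1/p) * Al)"
  proof -
    have nn3: "0 \<le> m powr (1/p) * Am" "0 \<le> l powr (1/p) * Al" "0 \<le> r powr (1/p) * Al" using A0 by auto
    have "H \<le> (4*H*(1/48) + m powr (1/p) * Am) + (2*H*(1/48) + l powr (1/p) * Al) + (2*H*(1/48) + r powr (1/p) * Al)"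
      unfolding H_def[symmetric] using b1 b2 b3 by (subst H_def) (rule add_mono[OF add_mono])
    then have "H \<le> H / 6 + (m powr (1/p) * Am + l powr (1/p) * Al + r powr (1/p) * Al)"
      by (simp add: algebra_simps)
    then show ?thesis by (rule lin1) (use nn3 in simp)
  qed
  have n: "0 \<le> m powr (1/p) * Al" "0 \<le> l powr (1/p) * Am" "0 \<le> r powr (1/p) * Am"
    using A0 by auto
  have "2 * (m powr (1/p) * Am + l powr (1/p) * Al + r powr (1/p) * Al)
      \<le> 2 * (Am + Al) * (m powr (1/p) + l powr (1/p) + r powr (1/p))"
    using n by (simp add: algebra_simps)
  with H1 show ?thesis unfolding H_def Cst_def Am_def Al_def \<eta>_def m_def l_def r_def by simp
qed

lemma sup_bound:
  fixes g :: "real \<Rightarrow> 'b::real_normed_vector"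
  assumes g: "g \<in> Dmu \<mu>" and mu: "\<mu> > 0" and p: "p > 0" and Lp: "Lp_pow p g < \<infinity>"
  shows "(SUP t\<in>{0..1}. norm (g t)) \<le> 3 * hol_left \<mu> g + 2 * enn2real (Lp_pow p g) powr (1/p)"
proof -
  define Hl where "Hl = hol_left \<mu> g"
  define a where "a = norm (g 0)"
  define lq where "lq = enn2real (Lp_pow p g)"
  have Hl0: "Hl \<ge> 0" using hol_nonneg[OF g mu] unfolding Hl_def by simp
  have d: "dist (g 0) (g t) \<le> Hl" if t: "t \<in> {0..1}" for t
  proof (cases "t > 0")
    case True
    have "dist (g 0) (g t) \<le> Hl * t powr \<mu>" using hl_bound[OF g mu True] t unfolding Hl_def by simp
    also have "\<dots> \<le> Hl * 1" using Hl0 t mu by (intro mult_left_mono powr_le1) auto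
    finally show ?thesis by simp
  next
    case False
    then have "t = 0" using t by simp
    then show ?thesis using Hl0 by simp
  qed
  have lo: "a - Hl \<le> norm (g t)" if t: "t \<in> {0..1}" for t
  proof -
    have "norm (g 0) - norm (g t) \<le> norm (g 0 - g t)" by (rule norm_triangle_ineq2)
    then show ?thesis using d[OF t] unfolding a_def by (simp add: dist_norm)
  qed
  have hi: "norm (g t) \<le> a + Hl" if t: "t \<in> {0..1}" for t
  proof -
    have "norm (g t) - norm (g 0) \<le> norm (g t - g 0)" by (rule norm_triangle_ineq2)
    then show ?thesis using d[OF t] unfolding a_def by (simp add: dist_norm norm_minus_commute)
  qed
  have l0: "lq powr (1/p) \<ge> 0" by simp
  have a_le: "a \<le> 2 * Hl + 2 * lq powr (1/p)"
  proof (cases "a \<le> 2 * Hl")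
    case True then show ?thesis using l0 by linarith
  next
    case False
    have c0: "a/2 \<ge> 0" using False Hl0 by simp
    have "ennreal ((a/2) powr p) \<le> Lp_pow p g"
      by (rule Lp_lower[OF c0 p]) (use lo False in fastforce)
    then have "(a/2) powr p \<le> lq" unfolding lq_def using Lp by (rule enn_le)
    then have "((a/2) powr p) powr (1/p) \<le> lq powr (1/p)" using p by (intro powr_mono2) auto
    then have "a/2 \<le> lq powr (1/p)" using p c0 by (simp add: powr_powr)
    then show ?thesis using Hl0 by linarith
  qed
  show ?thesis
  proof (rule cSUP_least)
    show "{0..1::real} \<noteq> {}" by simp
    fix t :: real assume "t \<in> {0..1}"
    then show "norm (g t) \<le> 3 * hol_left \<mu> g + 2 * enn2real (Lp_pow p g) powr (1/p)"
      using hi a_le unfolding Hl_def lq_def by fastforce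
  qed
qed

theorem theorem1:
  fixes p \<mu> :: real
  assumes "p > 1" and "0 < \<mu>" and "\<mu> < 1"
  shows "\<exists>C>0.
    (\<forall>f::real \<Rightarrow> 'a::polish_space. f \<in> Dmu \<mu> \<longrightarrow>
       int_mid_pow \<mu> p f < \<infinity> \<longrightarrow> int_left_pow \<mu> p f < \<infinity> \<longrightarrow> int_right_pow \<mu> p f < \<infinity> \<longrightarrow>
       hol_mid \<mu> f + hol_left \<mu> f + hol_right \<mu> f
         \<le> C * (enn2real (int_mid_pow \<mu> p f) powr (1/p) + enn2real (int_left_pow \<mu> p f) powr (1/p)
                + enn2real (int_right_pow \<mu> p f) powr (1/p)))
  \<and> (\<forall>g::real \<Rightarrow> real ^ 'n. g \<in> Dmu \<mu> \<longrightarrow>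
       Lp_pow p g < \<infinity> \<longrightarrow>
       int_mid_pow \<mu> p g < \<infinity> \<longrightarrow> int_left_pow \<mu> p g < \<infinity> \<longrightarrow> int_right_pow \<mu> p g < \<infinity> \<longrightarrow>
       (SUP t\<in>{0..1}. norm (g t))
         \<le> C * (enn2real (Lp_pow p g) powr (1/p) + enn2real (int_mid_pow \<mu> p g) powr (1/p)
                + enn2real (int_left_pow \<mu> p g) powr (1/p) + enn2real (int_right_pow \<mu> p g) powr (1/p)))"
proof (intro exI[of _ "3 * Cst \<mu> p + 2"] conjI allI impI)
  have p: "p > 0" using assms by simp
  have mu: "\<mu> > 0" by fact
  have C0: "Cst \<mu> p \<ge> 0" by (rule Cst_nonneg)
  show "3 * Cst \<mu> p + 2 > 0" using C0 by simp
  fix f :: "real \<Rightarrow> 'a::polish_space"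
  assume f: "f \<in> Dmu \<mu>" and M: "int_mid_pow \<mu> p f < \<infinity>" and L: "int_left_pow \<mu> p f < \<infinity>"
    and R: "int_right_pow \<mu> p f < \<infinity>"
  let ?K = "enn2real (int_mid_pow \<mu> p f) powr (1/p) + enn2real (int_left_pow \<mu> p f) powr (1/p)
                + enn2real (int_right_pow \<mu> p f) powr (1/p)"
  have K0: "?K \<ge> 0" by simp
  have "hol_mid \<mu> f + hol_left \<mu> f + hol_right \<mu> f \<le> Cst \<mu> p * ?K"
    by (rule main_bound[OF f mu p M L R])
  also have "\<dots> \<le> (3 * Cst \<mu> p + 2) * ?K" using K0 C0 by (intro mult_right_mono) auto
  finally show "hol_mid \<mu> f + hol_left \<mu> f + hol_right \<mu> f \<le> (3 * Cst \<mu> p + 2) * ?K" .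
next
  have p: "p > 0" using assms by simp
  have mu: "\<mu> > 0" by fact
  have C0: "Cst \<mu> p \<ge> 0" by (rule Cst_nonneg)
  fix g :: "real \<Rightarrow> real ^ 'n"
  assume g: "g \<in> Dmu \<mu>" and Lp: "Lp_pow p g < \<infinity>" and M: "int_mid_pow \<mu> p g < \<infinity>"
    and L: "int_left_pow \<mu> p g < \<infinity>" and R: "int_right_pow \<mu> p g < \<infinity>"
  let ?K = "enn2real (int_mid_pow \<mu> p g) powr (1/p) + enn2real (int_left_pow \<mu> p g) powr (1/p)
                + enn2real (int_right_pow \<mu> p g) powr (1/p)"
  let ?l = "enn2real (Lp_pow p g) powr (1/p)"
  have K0: "?K \<ge> 0" and l0: "?l \<ge> 0" by simp_all
  have nn: "hol_mid \<mu> g \<ge> 0" "hol_right \<mu> g \<ge> 0" using hol_nonneg[OF g mu] by auto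
  have hb: "hol_mid \<mu> g + hol_left \<mu> g + hol_right \<mu> g \<le> Cst \<mu> p * ?K"
    by (rule main_bound[OF g mu p M L R])
  have sb: "(SUP t\<in>{0..1}. norm (g t)) \<le> 3 * hol_left \<mu> g + 2 * ?l"
    by (rule sup_bound[OF g mu p Lp])
  have "3 * hol_left \<mu> g + 2 * ?l \<le> 3 * (Cst \<mu> p * ?K) + 2 * ?l" using hb nn by linarith
  also have "\<dots> \<le> (3 * Cst \<mu> p + 2) * (?l + ?K)"
    using K0 l0 C0 by (simp add: algebra_simps)
  finally show "(SUP t\<in>{0..1}. norm (g t)) \<le> (3 * Cst \<mu> p + 2) * (?l + enn2real (int_mid_pow \<mu> p g) powr (1/p)
                + enn2real (int_left_pow \<mu> p g) powr (1/p) + enn2real (int_right_pow \<mu> p g) powr (1/p))"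
    using sb by (simp add: add.assoc)
qed



end
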